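(* Let $\phi\in C^3((0,\infty))$, $\eta=\phi'$ and $\hat\eta(r)=\eta(r)+2\eta(2r)$, and suppose there are constants $0<a_0<\tilde r_1<\tilde r_2<2a_0$ and $a_1>a_0$ such that: $\eta'(r)>0$ for $0<r<\tilde r_1$ and $\eta'(r)<0$ for $r>\tilde r_1$; $\eta''(r)<0$ for $0<r<\tilde r_2$ and $\eta''(r)>0$ for $r>\tilde r_2$; $\hat\eta(r)<0$ for $0<r<a_0$ and $\hat\eta(r)>0$ for $r>a_0$; $\hat\eta'(r)>0$ for $0<r<a_1$ and $\hat\eta'(r)<0$ for $r>a_1$. Let $N,K$ be positive integers with $K<N-1$ and define $\hat{\mathbf\Psi}^F:(0,\infty)^{2N+1}\to\mathbb R^{2N+1}$ by $\hat\psi^F_j(\mathbf r)=\eta(r_j)+2\eta(2r_j)$ for $-N\le j\le -K$ and for $K\le j\le N$, and $\hat\psi^F_j(\mathbf r)=\eta(r_j)+\eta(r_j+r_{j-1})+\eta(r_j+r_{j+1})+[2\eta(2r_K)-\eta(r_K+r_{K-1})-\eta(r_K+r_{K+1})]$ for $-K+1\le j\le K-1$. Suppose $r_L,r_U$ satisfy $\tilde r_2/2<r_L<r_U$ and $\eta'(r_U)+12\eta'(2r_L)\ge 0$. Then $r_U<a_1$, and the Jacobian matrix $D\hat{\mathbf\Psi}^F(\mathbf r)$ is strictly diagonally dominant for all $\mathbf r\in\Omega=(r_L,r_U)^{2N+1}$.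
   Context: A square matrix $(A_{ij})$ is strictly diagonally dominant if $|A_{ii}|>\sum_{j\ne i}|A_{ij}|$ for every row $i$. *)

theory Defs
  imports "HOL-Analysis.Analysis"
begin

text \<open>Vectors in (0,inf)^(2N+1) are indexed by the integers -N..N and
represented as functions int => real (only the values at indices -N..N matter).\<close>

definition etahat :: "(real \<Rightarrow> real) \<Rightarrow> real \<Rightarrow> real" where
  "etahat eta r = eta r + 2 * eta (2 * r)"

definition PsiF :: "(real \<Rightarrow> real) \<Rightarrow> nat \<Rightarrow> nat \<Rightarrow> (int \<Rightarrow> real) \<Rightarrow> int \<Rightarrow> real" where
  "PsiF eta N K r j =
     (if (- int N \<le> j \<and> j \<le> - int K) \<or> (int K \<le> j \<and> j \<le> int N)
      then eta (r j) + 2 * eta (2 * r j)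
      else eta (r j) + eta (r j + r (j - 1)) + eta (r j + r (j + 1))
           + (2 * eta (2 * r (int K)) - eta (r (int K) + r (int K - 1))
              - eta (r (int K) + r (int K + 1))))"

definition jac :: "((int \<Rightarrow> real) \<Rightarrow> int \<Rightarrow> real) \<Rightarrow> (int \<Rightarrow> real) \<Rightarrow> int \<Rightarrow> int \<Rightarrow> real" where
  "jac F r i j = deriv (\<lambda>t. F (r(j := t)) i) (r j)"

definition strictly_diag_dominant :: "int set \<Rightarrow> (int \<Rightarrow> int \<Rightarrow> real) \<Rightarrow> bool" where
  "strictly_diag_dominant I A \<longleftrightarrow>
     (\<forall>i\<in>I. \<bar>A i i\<bar> > (\<Sum>j\<in>I - {i}. \<bar>A i j\<bar>))"

end

theory Submission
  imports Defs
begin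


lemma lin_piece:
  fixes eta eta1 :: "real \<Rightarrow> real"
  assumes eta_d: "\<And>x. x > 0 \<Longrightarrow> (eta has_real_derivative eta1 x) (at x)"
    and pos: "m * s + \<beta> > 0"
  shows "((\<lambda>t. eta (m * t + \<beta>)) has_real_derivative eta1 (m * s + \<beta>) * m) (at s)"
proof -
  have "((\<lambda>t. m * t + \<beta>) has_real_derivative m) (at s)"
    by (auto intro!: derivative_eq_intros)
  then show ?thesis using DERIV_chain2[where f=eta and g="\<lambda>t. m * t + \<beta>" and x=s and Db=m and s=UNIV] eta_d[OF pos] by blast
qed

definition ind :: "int \<Rightarrow> int \<Rightarrow> real" where "ind x y = (if x = y then 1 else 0)"

lemma deriv_rep:
  fixes eta eta1 :: "real \<Rightarrow> real" and F :: "(int \<Rightarrow> real) \<Rightarrow> real"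
    and r :: "int \<Rightarrow> real" and c :: "nat \<Rightarrow> real" and a b :: "nat \<Rightarrow> int"
  assumes eta_d: "\<And>x. x > 0 \<Longrightarrow> (eta has_real_derivative eta1 x) (at x)"
    and rep: "\<And>r'. F r' = eta (r' i) + (\<Sum>p<n. c p * eta (r' (a p) + r' (b p)))"
    and pos: "r i > 0" "\<And>p. p < n \<Longrightarrow> r (a p) > 0" "\<And>p. p < n \<Longrightarrow> r (b p) > 0"
  shows "deriv (\<lambda>t. F (r(j:=t))) (r j) = ind i j * eta1 (r i)
     + (\<Sum>p<n. c p * eta1 (r (a p) + r (b p)) * (ind (a p) j + ind (b p) j))"
proof -
  have d0: "((\<lambda>t. eta ((r(j:=t)) i)) has_real_derivative ind i j * eta1 (r i)) (at (r j))"
  proof -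
    define \<beta> where "\<beta> = (if i = j then 0 else r i)"
    have e: "\<And>t. (r(j:=t)) i = ind i j * t + \<beta>" by (auto simp: ind_def \<beta>_def)
    have e2: "ind i j * r j + \<beta> = r i" by (auto simp: ind_def \<beta>_def)
    show ?thesis unfolding e using lin_piece[OF eta_d, of "ind i j" "r j" \<beta>] e2 pos(1)
      by (simp add: mult.commute)
  qed
  have dp: "((\<lambda>t. c p * eta ((r(j:=t)) (a p) + (r(j:=t)) (b p))) has_real_derivative
      c p * eta1 (r (a p) + r (b p)) * (ind (a p) j + ind (b p) j)) (at (r j))" if "p < n" for p
  proof -
    define \<beta> where "\<beta> = (if a p = j then 0 else r (a p)) + (if b p = j then 0 else r (b p))"
    define m where "m = ind (a p) j + ind (b p) j"
    have e: "\<And>t. (r(j:=t)) (a p) + (r(j:=t)) (b p) = m * t + \<beta>"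
      by (auto simp: ind_def \<beta>_def m_def algebra_simps)
    have e2: "m * r j + \<beta> = r (a p) + r (b p)" by (auto simp: ind_def \<beta>_def m_def algebra_simps)
    have "m * r j + \<beta> > 0" using e2 pos(2,3)[OF that] by simp
    from DERIV_cmult[OF lin_piece[OF eta_d this], of "c p"]
    show ?thesis unfolding e m_def[symmetric] e2[symmetric] by (simp add: mult.assoc)
  qed
  have "((\<lambda>t. F (r(j:=t))) has_real_derivative ind i j * eta1 (r i)
     + (\<Sum>p<n. c p * eta1 (r (a p) + r (b p)) * (ind (a p) j + ind (b p) j))) (at (r j))"
    unfolding rep by (intro DERIV_add d0 DERIV_sum dp) simp
  then show ?thesis by (rule DERIV_imp_deriv)
qed

lemma row_dd:
  fixes I :: "int set" and A :: "int \<Rightarrow> real" and c g :: "nat \<Rightarrow> real" and a b :: "nat \<Rightarrow> int"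
  assumes fin: "finite I" and iI: "i \<in> I" and aI: "\<And>p. p < n \<Longrightarrow> a p \<in> I"
    and bI: "\<And>p. p < n \<Longrightarrow> b p \<in> I"
    and A: "\<And>j. A j = ind i j * dd + (\<Sum>p<n. c p * g p * (ind (a p) j + ind (b p) j))"
    and dd: "dd > 2 * (\<Sum>p<n. \<bar>c p\<bar> * \<bar>g p\<bar>)"
  shows "\<bar>A i\<bar> > (\<Sum>j\<in>I-{i}. \<bar>A j\<bar>)"
proof -
  define m where "m p j = ind (a p) j + ind (b p) j" for p j
  have m0: "m p j \<ge> 0" for p j by (simp add: m_def ind_def)
  have msum: "(\<Sum>j\<in>I. m p j) = 2" if "p < n" for p
  proof -
    have "(\<Sum>j\<in>I. ind (a p) j) = 1" using aI[OF that] fin by (simp add: ind_def)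
    moreover have "(\<Sum>j\<in>I. ind (b p) j) = 1" using bI[OF that] fin by (simp add: ind_def)
    ultimately show ?thesis by (simp add: m_def sum.distrib)
  qed
  have msum2: "(\<Sum>j\<in>I-{i}. m p j) = 2 - m p i" if "p < n" for p
    using msum[OF that] sum.remove[OF fin iI, of "m p"] by simp
  have "(\<Sum>j\<in>I-{i}. \<bar>A j\<bar>) \<le> (\<Sum>j\<in>I-{i}. \<Sum>p<n. \<bar>c p\<bar> * \<bar>g p\<bar> * m p j)"
  proof (rule sum_mono)
    fix j assume "j \<in> I - {i}"
    then have "A j = (\<Sum>p<n. c p * g p * m p j)" by (simp add: A ind_def m_def)
    also have "\<bar>\<dots>\<bar> \<le> (\<Sum>p<n. \<bar>c p * g p * m p j\<bar>)" by (rule sum_abs)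
    also have "\<dots> = (\<Sum>p<n. \<bar>c p\<bar> * \<bar>g p\<bar> * m p j)"
      using m0 by (simp add: abs_mult)
    finally show "\<bar>A j\<bar> \<le> (\<Sum>p<n. \<bar>c p\<bar> * \<bar>g p\<bar> * m p j)" .
  qed
  also have "\<dots> = (\<Sum>p<n. \<bar>c p\<bar> * \<bar>g p\<bar> * (\<Sum>j\<in>I-{i}. m p j))"
    by (subst sum.swap) (simp add: sum_distrib_left)
  also have "\<dots> = (\<Sum>p<n. \<bar>c p\<bar> * \<bar>g p\<bar> * (2 - m p i))"
    by (rule sum.cong) (auto simp: msum2)
  finally have off: "(\<Sum>j\<in>I-{i}. \<bar>A j\<bar>) \<le> (\<Sum>p<n. \<bar>c p\<bar> * \<bar>g p\<bar> * (2 - m p i))" .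
  have "A i = dd + (\<Sum>p<n. c p * g p * m p i)" by (simp add: A ind_def m_def)
  moreover have "(\<Sum>p<n. c p * g p * m p i) \<ge> - (\<Sum>p<n. \<bar>c p\<bar> * \<bar>g p\<bar> * m p i)"
  proof -
    have "(\<Sum>p<n. - (\<bar>c p\<bar> * \<bar>g p\<bar> * m p i)) \<le> (\<Sum>p<n. c p * g p * m p i)"
    proof (rule sum_mono)
      fix p
      have "\<bar>c p * g p * m p i\<bar> = \<bar>c p\<bar> * \<bar>g p\<bar> * m p i" using m0 by (simp add: abs_mult)
      then show "- (\<bar>c p\<bar> * \<bar>g p\<bar> * m p i) \<le> c p * g p * m p i" by linarith
    qed
    then show ?thesis by (simp add: sum_negf)
  qed
  ultimately have "A i \<ge> dd - (\<Sum>p<n. \<bar>c p\<bar> * \<bar>g p\<bar> * m p i)" by linarith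
  moreover have "(\<Sum>p<n. \<bar>c p\<bar> * \<bar>g p\<bar> * m p i) + (\<Sum>p<n. \<bar>c p\<bar> * \<bar>g p\<bar> * (2 - m p i))
      = 2 * (\<Sum>p<n. \<bar>c p\<bar> * \<bar>g p\<bar>)"
    by (simp add: sum.distrib[symmetric] sum_distrib_left algebra_simps)
  ultimately show ?thesis using off dd by linarith
qed

theorem lemma4p4:
  fixes phi eta eta1 eta2 :: "real \<Rightarrow> real"
    and a0 a1 rt1 rt2 rL rU :: real
    and N K :: nat
  assumes phi_d: "\<And>x. x > 0 \<Longrightarrow> (phi has_real_derivative eta x) (at x)"
    and eta_d: "\<And>x. x > 0 \<Longrightarrow> (eta has_real_derivative eta1 x) (at x)"
    and eta1_d: "\<And>x. x > 0 \<Longrightarrow> (eta1 has_real_derivative eta2 x) (at x)"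
    and eta2_c: "continuous_on {0<..} eta2"
    and cst: "0 < a0" "a0 < rt1" "rt1 < rt2" "rt2 < 2 * a0" "a1 > a0"
    and h1: "\<And>r. 0 < r \<Longrightarrow> r < rt1 \<Longrightarrow> eta1 r > 0"
    and h2: "\<And>r. r > rt1 \<Longrightarrow> eta1 r < 0"
    and h3: "\<And>r. 0 < r \<Longrightarrow> r < rt2 \<Longrightarrow> eta2 r < 0"
    and h4: "\<And>r. r > rt2 \<Longrightarrow> eta2 r > 0"
    and h5: "\<And>r. 0 < r \<Longrightarrow> r < a0 \<Longrightarrow> etahat eta r < 0"
    and h6: "\<And>r. r > a0 \<Longrightarrow> etahat eta r > 0"
    and h7: "\<And>r. 0 < r \<Longrightarrow> r < a1 \<Longrightarrow> deriv (etahat eta) r > 0"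
    and h8: "\<And>r. r > a1 \<Longrightarrow> deriv (etahat eta) r < 0"
    and NK: "0 < K" "0 < N" "K < N - 1"
    and rLU: "rt2 / 2 < rL" "rL < rU"
    and rU: "eta1 rU + 12 * eta1 (2 * rL) \<ge> 0"
  shows "rU < a1 \<and>
         (\<forall>r. (\<forall>j\<in>{- int N..int N}. r j \<in> {rL<..<rU}) \<longrightarrow>
              strictly_diag_dominant {- int N..int N} (jac (PsiF eta N K) r))"
proof -
  have rt2pos: "rt2 > 0" using cst by simp
  have cont1: "continuous_on {x..y} eta1" if "0 < x" for x y
  proof (rule continuous_at_imp_continuous_on, intro ballI)
    fix z assume "z \<in> {x..y}"
    then have "z > 0" using that by simp
    then show "isCont eta1 z" using DERIV_isCont[OF eta1_d] by blast
  qed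
  have dec: "eta1 y < eta1 x" if "0 < x" "x < y" "y \<le> rt2" for x y
  proof (rule DERIV_neg_imp_decreasing_open[OF that(2) _ cont1[OF that(1)]])
    fix z assume "x < z" "z < y"
    then show "\<exists>d. DERIV eta1 z :> d \<and> d < 0" using that eta1_d[of z] h3[of z] by auto
  qed
  have inc: "eta1 x < eta1 y" if "rt2 \<le> x" "x < y" for x y
  proof (rule DERIV_pos_imp_increasing_open[OF that(2) _ cont1])
    fix z assume "x < z" "z < y"
    then show "\<exists>d. DERIV eta1 z :> d \<and> d > 0" using that eta1_d[of z] h4[of z] rt2pos by auto
  next
    show "0 < x" using that rt2pos by simp
  qed
  define e where "e = - eta1 (2 * rL)"
  have e_pos: "e > 0" unfolding e_def using h2[of "2 * rL"] cst rLU by simp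
  have rU_le: "rU \<le> rt2"
  proof (rule ccontr)
    assume "\<not> rU \<le> rt2"
    then have "eta1 rU < 0" using h2 cst by simp
    then show False using rU e_pos unfolding e_def by simp
  qed
  have ge12: "eta1 rU \<ge> 12 * e" using rU unfolding e_def by simp
  have small: "\<bar>eta1 s\<bar> < e" if "s > 2 * rL" for s
  proof -
    have "eta1 s < 0" using h2 cst rLU that by simp
    moreover have "eta1 (2 * rL) < eta1 s" using inc[of "2 * rL" s] rLU that by simp
    ultimately show ?thesis unfolding e_def by simp
  qed
  have big: "eta1 x > 12 * e" if "rL < x" "x < rU" for x
    using dec[of x rU] that rU_le rLU rt2pos ge12 by simp
  define g where "g x = eta1 x + 4 * eta1 (2 * x)" for x
  have gd: "((\<lambda>x. eta1 x + 4 * eta1 (2 * x)) has_real_derivative eta2 x + 4 * (eta2 (2 * x) * 2)) (at x)"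
    if "x > 0" for x
  proof -
    have "((\<lambda>x. eta1 (2 * x)) has_real_derivative eta2 (2 * x) * 2) (at x)"
      using DERIV_chain2[where f=eta1 and g="\<lambda>x. 2 * x" and x=x and Db=2 and s=UNIV] eta1_d[of "2*x"] that
      by (auto intro!: derivative_eq_intros)
    then show ?thesis by (intro DERIV_add DERIV_cmult eta1_d that)
  qed
  have etad: "((etahat eta) has_real_derivative g x) (at x)" if "x > 0" for x
  proof -
    have "((\<lambda>x. eta (2 * x)) has_real_derivative eta1 (2 * x) * 2) (at x)"
      using DERIV_chain2[where f=eta and g="\<lambda>x. 2 * x" and x=x and Db=2 and s=UNIV] eta_d[of "2*x"] that
      by (auto intro!: derivative_eq_intros)
    then have "((\<lambda>x. eta x + 2 * eta (2 * x)) has_real_derivative eta1 x + 2 * (eta1 (2 * x) * 2)) (at x)"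
      by (intro DERIV_add DERIV_cmult eta_d that)
    then show ?thesis unfolding g_def etahat_def[abs_def] by simp
  qed
  have dg: "deriv (etahat eta) x = g x" if "x > 0" for x
    using DERIV_imp_deriv[OF etad[OF that]] .
  have grU: "g rU > 0"
    using ge12 small[of "2 * rU"] rLU unfolding g_def by simp
  have rLpos: "rL > 0" using rLU rt2pos by simp
  have part1: "rU < a1"
  proof (rule ccontr)
    assume "\<not> rU < a1"
    then consider "a1 < rU" | "a1 = rU" by linarith
    then show False
    proof cases
      case 1
      then show False using h8[of rU] dg[of rU] grU rLpos rLU by simp
    next
      case 2
      have "isCont g rU" unfolding g_def[abs_def]
        using DERIV_isCont[OF gd[of rU]] rLpos rLU by simp
      then have "g \<midarrow>rU\<rightarrow> g rU" by (simp add: isCont_def)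
      then obtain s where s: "s > 0" "\<And>x. x \<noteq> rU \<and> norm (x - rU) < s \<longrightarrow> norm (g x - g rU) < g rU"
        using grU unfolding LIM_eq by blast
      have "\<bar>g (rU + s/2) - g rU\<bar> < g rU" using s by simp
      then have "g (rU + s/2) > 0" by simp
      moreover have "deriv (etahat eta) (rU + s/2) < 0" using h8[of "rU + s/2"] 2 s by simp
      ultimately show False using dg[of "rU + s/2"] rLpos rLU s by simp
    qed
  qed
  have part2: "strictly_diag_dominant {- int N..int N} (jac (PsiF eta N K) r)"
    if hr: "\<forall>j\<in>{- int N..int N}. r j \<in> {rL<..<rU}" for r
    unfolding strictly_diag_dominant_def
  proof
    fix i assume iI: "i \<in> {- int N..int N}"
    define I where "I = {- int N..int N}"
    have rIn: "r j \<in> {rL<..<rU}" if "j \<in> I" for j using hr that unfolding I_def by blast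
    have rI: "rL < r j" "r j < rU" if "j \<in> I" for j using rIn[OF that] by auto
    have rpos: "r j > 0" if "j \<in> I" for j using rI(1)[OF that] rLpos by linarith
    have sm: "\<bar>eta1 (r a + r b)\<bar> < e" if "a \<in> I" "b \<in> I" for a b
    proof -
      have "r a + r b > 2 * rL" using rI(1)[OF that(1)] rI(1)[OF that(2)] by linarith
      then show ?thesis by (rule small)
    qed
    have iI': "i \<in> I" using iI unfolding I_def .
    have di: "eta1 (r i) > 12 * e" using big[OF rI[OF iI']] .
    show "(\<Sum>j\<in>{- int N..int N} - {i}. \<bar>jac (PsiF eta N K) r i j\<bar>) < \<bar>jac (PsiF eta N K) r i i\<bar>"
    proof (cases "(- int N \<le> i \<and> i \<le> - int K) \<or> (int K \<le> i \<and> i \<le> int N)")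
      case True
      define c where "c = (\<lambda>p::nat. 2::real)"
      define a where "a = (\<lambda>p::nat. i)"
      have rep: "PsiF eta N K r' i = eta (r' i) + (\<Sum>p<1. c p * eta (r' (a p) + r' (a p)))" for r'
      proof -
        have "r' i + r' i = 2 * r' i" by simp
        then show ?thesis using True by (simp add: PsiF_def c_def a_def)
      qed
      have J: "jac (PsiF eta N K) r i j = ind i j * eta1 (r i)
         + (\<Sum>p<1. c p * eta1 (r (a p) + r (a p)) * (ind (a p) j + ind (a p) j))" for j
        unfolding jac_def
        by (rule deriv_rep[where F="\<lambda>r'. PsiF eta N K r' i", OF eta_d rep])
           (use rpos iI I_def a_def in auto)
      show ?thesis
        apply (rule row_dd[where A="jac (PsiF eta N K) r i" and c=c and a=a and b=a
              and g="\<lambda>p. eta1 (r (a p) + r (a p))" and n=1 and dd="eta1 (r i)"])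
        subgoal by simp
        subgoal by (rule iI)
        subgoal using iI by (simp add: a_def)
        subgoal using iI by (simp add: a_def)
        subgoal for j using J[of j] by simp
        subgoal using sm[of i i] di e_pos iI I_def by (simp add: a_def c_def)
        done
    next
      case False
      then have ik: "- int K < i" "i < int K" using iI by auto
      have KN: "int K + 2 \<le> int N" using NK by linarith
      define c where "c = (\<lambda>p::nat. [1, 1, 2, -1, -1::real] ! p)"
      define a where "a = (\<lambda>p::nat. [i, i, int K, int K, int K] ! p)"
      define b where "b = (\<lambda>p::nat. [i - 1, i + 1, int K, int K - 1, int K + 1] ! p)"
      have rep: "PsiF eta N K r' i = eta (r' i) + (\<Sum>p<5. c p * eta (r' (a p) + r' (b p)))" for r'
      proof -
        have "r' (int K) + r' (int K) = 2 * r' (int K)" by simp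
        then show ?thesis unfolding PsiF_def if_not_P[OF False] by (simp add: c_def a_def b_def eval_nat_numeral)
      qed
      have p5: "p = 0 \<or> p = 1 \<or> p = 2 \<or> p = 3 \<or> p = 4" if "p < 5" for p :: nat
        using that by auto
      have abI: "a p \<in> I" "b p \<in> I" if "p < 5" for p
        using p5[OF that] ik iI KN NK unfolding I_def a_def b_def by auto
      have J: "jac (PsiF eta N K) r i j = ind i j * eta1 (r i)
         + (\<Sum>p<5. c p * eta1 (r (a p) + r (b p)) * (ind (a p) j + ind (b p) j))" for j
        unfolding jac_def
        by (rule deriv_rep[where F="\<lambda>r'. PsiF eta N K r' i", OF eta_d rep])
           (use rpos iI I_def abI in auto)
      have bnd: "\<bar>eta1 (r (a p) + r (b p))\<bar> < e" if "p < 5" for p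
        using sm abI[OF that] by simp
      have "2 * (\<Sum>p<5. \<bar>c p\<bar> * \<bar>eta1 (r (a p) + r (b p))\<bar>) < 12 * e"
        using bnd[of 0] bnd[of 1] bnd[of 2] bnd[of 3] bnd[of 4]
        by (simp add: eval_nat_numeral c_def)
      then show ?thesis
        apply (intro row_dd[where A="jac (PsiF eta N K) r i" and c=c and a=a and b=b
              and g="\<lambda>p. eta1 (r (a p) + r (b p))" and n=5 and dd="eta1 (r i)"])
        subgoal by simp
        subgoal by (rule iI)
        subgoal for p using abI[of p] by (simp add: I_def)
        subgoal for p using abI[of p] by (simp add: I_def)
        subgoal for j using J[of j] by simp
        subgoal using di by simp
        done
    qed
  qed
  show ?thesis using part1 part2 by blast
qed

end
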